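(* Let $\mathbf{w}=(\mathbf{w}_1,\dots,\mathbf{w}_{d+1})\in\mathbb{R}^{d+1}$ with $\|\mathbf{w}\|_2=1$, $\mathbf{w}_1\le 1/\sqrt2$, $\mathbf{w}_2=\dots=\mathbf{w}_{d+1}$ and $|\mathbf{w}_2|\ge 1/\sqrt{2d}$. If $\epsilon_\infty\ge\frac{2}{d}\epsilon_1$ and $\epsilon_\infty\ge\sqrt{\frac{2}{d}}\,\epsilon_2$, then the $\ell_\infty$-player dominates the $\ell_1$-player and the $\ell_2$-player, i.e. for every $(\mathbf{x},y)$, $1-y\mathbf{w}^\top(\mathbf{x}+\boldsymbol{\delta}_\infty)>1-y\mathbf{w}^\top(\mathbf{x}+\boldsymbol{\delta}_1)$ and $1-y\mathbf{w}^\top(\mathbf{x}+\boldsymbol{\delta}_\infty)>1-y\mathbf{w}^\top(\mathbf{x}+\boldsymbol{\delta}_2)$; in other words, the MAX/MSD training procedure for the soft-SVM model cannot converge.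
   Context: For $\mathbf{x}\in\mathbb{R}^{d+1}$, $y\in\{-1,+1\}$ and weights $\mathbf{w}$, the three players' (optimal) perturbations are $\boldsymbol{\delta}_\infty=-y\epsilon_\infty\operatorname{sign}(\mathbf{w})$, $\boldsymbol{\delta}_1=-y\epsilon_1\mathbf{w}/\|\mathbf{w}\|_1$, $\boldsymbol{\delta}_2=-y\epsilon_2\mathbf{w}/\|\mathbf{w}\|_2$, with budgets $\epsilon_1,\epsilon_2,\epsilon_\infty>0$. The soft-SVM model with MAX/MSD updates at each step the unit-norm weights using only the perturbation that incurs the largest soft-SVM loss $\max(0,1-y\mathbf{w}^\top(\mathbf{x}+\boldsymbol{\delta}))$. *)

theory Defs
  imports Complex_Main
begin

(* Vectors in R^(d+1) are represented as functions nat => real,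
   with coordinates indexed by {1..d+1} (coordinate i = w_i of the paper). *)

definition dotp :: "nat \<Rightarrow> (nat \<Rightarrow> real) \<Rightarrow> (nat \<Rightarrow> real) \<Rightarrow> real" where
  "dotp d u v = (\<Sum>i=1..d+1. u i * v i)"

definition norm1 :: "nat \<Rightarrow> (nat \<Rightarrow> real) \<Rightarrow> real" where
  "norm1 d w = (\<Sum>i=1..d+1. \<bar>w i\<bar>)"

definition norm2 :: "nat \<Rightarrow> (nat \<Rightarrow> real) \<Rightarrow> real" where
  "norm2 d w = sqrt (\<Sum>i=1..d+1. (w i)^2)"

definition delta_inf :: "real \<Rightarrow> real \<Rightarrow> (nat \<Rightarrow> real) \<Rightarrow> (nat \<Rightarrow> real)" where
  "delta_inf eps y w = (\<lambda>i. - y * eps * sgn (w i))"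

definition delta_1 :: "nat \<Rightarrow> real \<Rightarrow> real \<Rightarrow> (nat \<Rightarrow> real) \<Rightarrow> (nat \<Rightarrow> real)" where
  "delta_1 d eps y w = (\<lambda>i. - y * eps * w i / norm1 d w)"

definition delta_2 :: "nat \<Rightarrow> real \<Rightarrow> real \<Rightarrow> (nat \<Rightarrow> real) \<Rightarrow> (nat \<Rightarrow> real)" where
  "delta_2 d eps y w = (\<lambda>i. - y * eps * w i / norm2 d w)"

definition margin_loss :: "nat \<Rightarrow> (nat \<Rightarrow> real) \<Rightarrow> (nat \<Rightarrow> real) \<Rightarrow> real \<Rightarrow> (nat \<Rightarrow> real) \<Rightarrow> real" where
  "margin_loss d w x y \<delta> = 1 - y * dotp d w (\<lambda>i. x i + \<delta> i)"

end

theory Submission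
  imports Defs
begin

lemma split_sum: "(\<Sum>i=1..d+1. f i) = f (1::nat) + (\<Sum>i=2..d+1. (f i::real))"
  by (simp add: sum.atLeast_Suc_atMost numeral_2_eq_2)

lemma const_sum:
  assumes "\<forall>i\<in>{2..d+1}. w i = w 2"
  shows "(\<Sum>i=2..d+1. g (w i)) = real d * (g (w 2) :: real)"
proof -
  have "(\<Sum>i=2..d+1. g (w i)) = (\<Sum>i=2..d+1. g (w 2))"
  proof (rule sum.cong[OF refl])
    fix i assume "i \<in> {2..d+1}"
    then have "w i = w 2" using assms by blast
    thus "g (w i) = g (w 2)" by simp
  qed
  thus ?thesis by simp
qed

lemma dot_add: "dotp d w (\<lambda>i. x i + e i) = dotp d w x + dotp d w e"
  by (simp add: dotp_def distrib_left sum.distrib)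

theorem lemma6:
  fixes d :: nat and w :: "nat \<Rightarrow> real" and eps1 eps2 epsinf :: real
  assumes "d \<ge> 1"
    and "norm2 d w = 1"
    and "w 1 \<le> 1 / sqrt 2"
    and "\<forall>i\<in>{2..d+1}. w i = w 2"
    and "\<bar>w 2\<bar> \<ge> 1 / sqrt (2 * real d)"
    and "eps1 > 0" and "eps2 > 0" and "epsinf > 0"
    and "epsinf \<ge> (2 / real d) * eps1"
    and "epsinf \<ge> sqrt (2 / real d) * eps2"
  shows "\<forall>(x :: nat \<Rightarrow> real) (y :: real). y \<in> {-1, 1} \<longrightarrow>
      margin_loss d w x y (delta_inf epsinf y w) > margin_loss d w x y (delta_1 d eps1 y w) \<and>
      margin_loss d w x y (delta_inf epsinf y w) > margin_loss d w x y (delta_2 d eps2 y w)"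
proof (intro allI impI)
  fix x :: "nat \<Rightarrow> real" and y :: real
  assume y: "y \<in> {-1, 1}"
  hence yy: "y * y = 1" by auto
  define N where "N = norm1 d w"
  have S2: "(\<Sum>i=1..d+1. (w i)^2) = w 1 ^2 + real d * (w 2)^2"
    using split_sum[of "\<lambda>i. (w i)^2" d] const_sum[OF assms(4), of "\<lambda>t. t^2"] by simp
  have sq: "(\<Sum>i=1..d+1. (w i)^2) = 1"
    using assms(2) unfolding norm2_def by simp
  hence unit: "w 1 ^2 + real d * (w 2)^2 = 1" using S2 by simp
  have Nv: "N = \<bar>w 1\<bar> + real d * \<bar>w 2\<bar>"
    unfolding N_def norm1_def
    using split_sum[of "\<lambda>i. \<bar>w i\<bar>" d] const_sum[OF assms(4), of abs] by simp
  have dpos: "real d > 0" using assms(1) by simp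
  have w2sq: "(w 2)^2 \<ge> 1 / (2 * real d)"
  proof -
    have "(1 / sqrt (2 * real d))^2 \<le> \<bar>w 2\<bar>^2"
      using assms(5) by (intro power_mono) auto
    thus ?thesis using dpos by (simp add: power_divide)
  qed
  have dw: "real d * real d * (w 2)^2 \<ge> real d / 2"
    using mult_left_mono[OF w2sq, of "real d * real d"] dpos by (simp add: field_simps)
  have NN: "N^2 > real d / 2"
  proof (cases "w 1 = 0")
    case True
    hence u: "real d * (w 2)^2 = 1" using unit by simp
    have "N^2 = real d * (real d * (w 2)^2)"
      using True Nv by (simp add: power_mult_distrib power2_eq_square)
    hence "N^2 = real d" using u by simp
    thus ?thesis using dpos by simp
  next
    case False
    have "N^2 = w 1^2 + real d * real d * (w 2)^2 + 2 * real d * \<bar>w 1\<bar> * \<bar>w 2\<bar>"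
      using Nv by (simp add: power2_eq_square algebra_simps)
    moreover have "w 1^2 > 0" using False by simp
    moreover have "2 * real d * \<bar>w 1\<bar> * \<bar>w 2\<bar> \<ge> 0" using dpos by simp
    ultimately show ?thesis using dw by linarith
  qed
  have N0: "N \<ge> 0" using Nv dpos by simp
  have Npos: "N > 0" using NN N0 dpos by (cases "N = 0") auto
  have ms: "\<And>t::real. t * sgn t = \<bar>t\<bar>" by (simp add: sgn_if)
  have dinf: "dotp d w (delta_inf epsinf y w) = - y * epsinf * N"
  proof -
    have "dotp d w (delta_inf epsinf y w) = (\<Sum>i=1..d+1. (- y * epsinf) * (w i * sgn (w i)))"
      unfolding dotp_def delta_inf_def by (intro sum.cong) (auto simp: algebra_simps)
    also have "\<dots> = (- y * epsinf) * (\<Sum>i=1..d+1. \<bar>w i\<bar>)"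
      by (simp only: ms sum_distrib_left)
    also have "\<dots> = - y * epsinf * N"
      unfolding N_def norm1_def by simp
    finally show ?thesis .
  qed
  have d1: "dotp d w (delta_1 d eps1 y w) = - y * eps1 / N"
  proof -
    have "dotp d w (delta_1 d eps1 y w) = (\<Sum>i=1..d+1. (- y * eps1 / N) * (w i)^2)"
      unfolding dotp_def delta_1_def N_def by (intro sum.cong) (auto simp: power2_eq_square)
    also have "\<dots> = (- y * eps1 / N) * (\<Sum>i=1..d+1. (w i)^2)"
      by (simp only: sum_distrib_left)
    also have "\<dots> = - y * eps1 / N"
      by (simp only: sq mult_1_right)
    finally show ?thesis .
  qed
  have d2: "dotp d w (delta_2 d eps2 y w) = - y * eps2"
  proof -
    have "dotp d w (delta_2 d eps2 y w) = (\<Sum>i=1..d+1. (- y * eps2) * (w i)^2)"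
      unfolding dotp_def delta_2_def assms(2) by (intro sum.cong) (auto simp: power2_eq_square)
    also have "\<dots> = (- y * eps2) * (\<Sum>i=1..d+1. (w i)^2)"
      by (simp only: sum_distrib_left)
    also have "\<dots> = - y * eps2"
      by (simp only: sq mult_1_right)
    finally show ?thesis .
  qed
  have L: "\<And>e. margin_loss d w x y e = 1 - y * dotp d w x - y * dotp d w e"
    unfolding margin_loss_def dot_add by (simp add: algebra_simps)
  have c1: "epsinf * N > eps1 / N"
  proof -
    have ge1: "epsinf * (N * N) \<ge> (2 / real d) * eps1 * (N * N)"
      using assms(9) by (intro mult_right_mono) auto
    have "(2 / real d) * (N * N) > 1"
      using NN dpos by (simp add: power2_eq_square field_simps)
    have e1: "(2 / real d) * eps1 * (N * N) > eps1"
      using mult_strict_left_mono[OF \<open>(2 / real d) * (N * N) > 1\<close> assms(6)]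
      by (simp add: ac_simps)
    have "epsinf * (N * N) > eps1" using ge1 e1 by linarith
    thus ?thesis using Npos by (simp add: field_simps)
  qed
  have c2: "epsinf * N > eps2"
  proof -
    have ge2: "epsinf * N \<ge> sqrt (2 / real d) * eps2 * N"
      using assms(10) Npos by (intro mult_right_mono) auto
    have "1^2 < (sqrt (2 / real d) * N)^2"
      using NN dpos by (simp add: power_mult_distrib field_simps)
    hence "sqrt (2 / real d) * N > 1"
      by (rule power_less_imp_less_base) (use Npos in simp)
    have e2: "sqrt (2 / real d) * eps2 * N > eps2"
      using mult_strict_left_mono[OF \<open>sqrt (2 / real d) * N > 1\<close> assms(7)]
      by (simp add: ac_simps)
    show ?thesis using ge2 e2 by linarith
  qed
  show "margin_loss d w x y (delta_inf epsinf y w) > margin_loss d w x y (delta_1 d eps1 y w) \<and>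
      margin_loss d w x y (delta_inf epsinf y w) > margin_loss d w x y (delta_2 d eps2 y w)"
    unfolding L dinf d1 d2 using c1 c2 yy
    by (simp add: algebra_simps)
qed

end
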